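(* Let $(G,c)$ be a W-state graph, and let $X$ and $X'$ be the vertex sets of the two connected components of the spanning subgraph $G_m=(V(G),E_m(G))$ of monochromatic edges. If $|X|=1$ or $|X'|=1$, then $(G,c)$ is a W-cone.
   Context: Graphs may have parallel edges but no loops. A half-edge $2$-colouring $c$ of $G$ assigns to each pair $(e,w)$ with $w$ an endpoint of edge $e$ a colour in $\{0,1\}$ (0 = blue, 1 = red). An edge $e=uv$ is bichromatic if $c(e,u)\neq c(e,v)$ and monochromatic otherwise; $E_m(G)$, $E_b(G)$ denote the monochromatic and bichromatic edge sets; standing convention: monochromatic edges are blue at both ends. A graph is matching-covered if every edge lies in some perfect matching. A W-state graph is a half-edge $2$-coloured matching-covered graph $(G,c)$ in which every perfect matching contains exactly one bichromatic edge, and every vertex $v$ is incident with an edge $e$ with $c(e,v)=1$. For any W-state graph, $G_m$ has exactly two connected components. A W-cone is a half-edge $2$-coloured matching-covered graph $(G,c)$ containing a vertex $v$ adjacent to all other vertices (the apex) such that the set of edges incident with $v$ equals $E_b(G)$, $E(G-v)=E_m(G)$, and every vertex $u$ is incident with an edge $e$ with $c(e,u)=1$. *)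

theory Defs
  imports Main
begin

text \<open>A finite multigraph (parallel edges allowed, no loops): vertex set V, edge set E,
  and an endpoint map ends assigning to each edge a 2-element set of vertices.\<close>
definition multigraph :: "'v set \<Rightarrow> 'e set \<Rightarrow> ('e \<Rightarrow> 'v set) \<Rightarrow> bool" where
  "multigraph V E ends \<longleftrightarrow> finite V \<and> finite E \<and>
     (\<forall>e\<in>E. ends e \<subseteq> V \<and> card (ends e) = 2)"

text \<open>Half-edge 2-colouring: c e w :: bool, False = blue (0), True = red (1).
  Only the values c e w with e \<in> E and w \<in> ends e are relevant.\<close>
definition bichromatic :: "('e \<Rightarrow> 'v set) \<Rightarrow> ('e \<Rightarrow> 'v \<Rightarrow> bool) \<Rightarrow> 'e \<Rightarrow> bool" where
  "bichromatic ends c e \<longleftrightarrow> (\<exists>u\<in>ends e. \<exists>w\<in>ends e. c e u \<noteq> c e w)"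

definition Em :: "'e set \<Rightarrow> ('e \<Rightarrow> 'v set) \<Rightarrow> ('e \<Rightarrow> 'v \<Rightarrow> bool) \<Rightarrow> 'e set" where
  "Em E ends c = {e\<in>E. \<not> bichromatic ends c e}"

definition Eb :: "'e set \<Rightarrow> ('e \<Rightarrow> 'v set) \<Rightarrow> ('e \<Rightarrow> 'v \<Rightarrow> bool) \<Rightarrow> 'e set" where
  "Eb E ends c = {e\<in>E. bichromatic ends c e}"

definition mono_blue :: "'e set \<Rightarrow> ('e \<Rightarrow> 'v set) \<Rightarrow> ('e \<Rightarrow> 'v \<Rightarrow> bool) \<Rightarrow> bool" where
  "mono_blue E ends c \<longleftrightarrow> (\<forall>e\<in>Em E ends c. \<forall>w\<in>ends e. c e w = False)"

definition perfect_matching :: "'v set \<Rightarrow> 'e set \<Rightarrow> ('e \<Rightarrow> 'v set) \<Rightarrow> 'e set \<Rightarrow> bool" where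
  "perfect_matching V E ends M \<longleftrightarrow> M \<subseteq> E \<and>
     (\<forall>v\<in>V. \<exists>!e. e \<in> M \<and> v \<in> ends e)"

definition matching_covered :: "'v set \<Rightarrow> 'e set \<Rightarrow> ('e \<Rightarrow> 'v set) \<Rightarrow> bool" where
  "matching_covered V E ends \<longleftrightarrow>
     (\<forall>e\<in>E. \<exists>M. perfect_matching V E ends M \<and> e \<in> M)"

definition every_vertex_red :: "'v set \<Rightarrow> 'e set \<Rightarrow> ('e \<Rightarrow> 'v set) \<Rightarrow> ('e \<Rightarrow> 'v \<Rightarrow> bool) \<Rightarrow> bool" where
  "every_vertex_red V E ends c \<longleftrightarrow> (\<forall>v\<in>V. \<exists>e\<in>E. v \<in> ends e \<and> c e v = True)"

definition W_state_graph :: "'v set \<Rightarrow> 'e set \<Rightarrow> ('e \<Rightarrow> 'v set) \<Rightarrow> ('e \<Rightarrow> 'v \<Rightarrow> bool) \<Rightarrow> bool" where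
  "W_state_graph V E ends c \<longleftrightarrow> multigraph V E ends \<and> mono_blue E ends c \<and>
     matching_covered V E ends \<and>
     (\<forall>M. perfect_matching V E ends M \<longrightarrow> card (M \<inter> Eb E ends c) = 1) \<and>
     every_vertex_red V E ends c"

definition W_cone :: "'v set \<Rightarrow> 'e set \<Rightarrow> ('e \<Rightarrow> 'v set) \<Rightarrow> ('e \<Rightarrow> 'v \<Rightarrow> bool) \<Rightarrow> bool" where
  "W_cone V E ends c \<longleftrightarrow> multigraph V E ends \<and> mono_blue E ends c \<and>
     matching_covered V E ends \<and>
     (\<exists>v\<in>V. (\<forall>u\<in>V - {v}. \<exists>e\<in>E. ends e = {u, v}) \<and>
            {e\<in>E. v \<in> ends e} = Eb E ends c \<and>
            {e\<in>E. v \<notin> ends e} = Em E ends c) \<and>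
     every_vertex_red V E ends c"

definition mono_adj :: "'e set \<Rightarrow> ('e \<Rightarrow> 'v set) \<Rightarrow> ('e \<Rightarrow> 'v \<Rightarrow> bool) \<Rightarrow> ('v \<times> 'v) set" where
  "mono_adj E ends c = {(u, w). \<exists>e\<in>Em E ends c. ends e = {u, w}}"

definition Gm_components :: "'v set \<Rightarrow> 'e set \<Rightarrow> ('e \<Rightarrow> 'v set) \<Rightarrow> ('e \<Rightarrow> 'v \<Rightarrow> bool) \<Rightarrow> 'v set set" where
  "Gm_components V E ends c = {{w\<in>V. (u, w) \<in> (mono_adj E ends c)\<^sup>*} | u. u \<in> V}"

end

theory Submission
  imports Defs
begin

lemma cone_aux:
  assumes W: "W_state_graph V E ends c"
    and vV: "v \<in> V"
    and comp: "{w\<in>V. (v, w) \<in> (mono_adj E ends c)\<^sup>*} = {v}"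
  shows "W_cone V E ends c"
proof -
  have mg: "multigraph V E ends" and mb: "mono_blue E ends c"
    and mc: "matching_covered V E ends"
    and pm: "\<And>M. perfect_matching V E ends M \<Longrightarrow> card (M \<inter> Eb E ends c) = 1"
    and red: "every_vertex_red V E ends c"
    using W unfolding W_state_graph_def by auto
  have finE: "finite E" and ends2: "\<And>e. e \<in> E \<Longrightarrow> ends e \<subseteq> V \<and> card (ends e) = 2"
    using mg unfolding multigraph_def by auto
  have ends_pair: "\<exists>w. w \<noteq> u \<and> ends e = {u, w}" if "e \<in> E" "u \<in> ends e" for e u
  proof -
    have "card (ends e) = 2" using ends2 that by auto
    then obtain a b where ab: "a \<noteq> b" "ends e = {a, b}" by (auto simp: card_2_iff)
    then show ?thesis using that(2) by auto
  qed
  have atv_bi: "bichromatic ends c e" if eE: "e \<in> E" and ve: "v \<in> ends e" for e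
  proof (rule ccontr)
    assume nb: "\<not> bichromatic ends c e"
    obtain w where w: "w \<noteq> v" "ends e = {v, w}" using ends_pair[OF eE ve] by blast
    have "w \<in> V" using ends2[OF that(1)] w by auto
    moreover have "(v, w) \<in> mono_adj E ends c"
      unfolding mono_adj_def Em_def using that nb w by auto
    ultimately have "w \<in> {w\<in>V. (v, w) \<in> (mono_adj E ends c)\<^sup>*}" by auto
    then show False using comp w by auto
  qed
  have bi_atv: "v \<in> ends e" if "e \<in> E" and "bichromatic ends c e" for e
  proof (rule ccontr)
    assume nv: "v \<notin> ends e"
    obtain M where M: "perfect_matching V E ends M" "e \<in> M" using mc \<open>e \<in> E\<close> unfolding matching_covered_def by blast
    have ME: "M \<subseteq> E" and ex1: "\<forall>v\<in>V. \<exists>!e. e \<in> M \<and> v \<in> ends e"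
      using M(1) unfolding perfect_matching_def by simp_all
    have "\<exists>!e. e \<in> M \<and> v \<in> ends e" using ex1 vV by (rule bspec)
    then obtain f where f: "f \<in> M" "v \<in> ends f" by (rule ex1E) (erule conjE, assumption)
    have fE: "f \<in> E" using f(1) ME by blast 
    have ebi: "e \<in> Eb E ends c" "f \<in> Eb E ends c"
      using atv_bi[OF fE f(2)] M(2) ME fE \<open>e \<in> E\<close> \<open>bichromatic ends c e\<close> unfolding Eb_def by simp_all
    have "f \<noteq> e" using f nv by auto
    moreover have "e \<in> M \<inter> Eb E ends c" "f \<in> M \<inter> Eb E ends c"
      using M(2) f(1) ebi by simp_all
    moreover have "finite (M \<inter> Eb E ends c)" using ME finE by (meson finite_Int finite_subset)
    ultimately have "card {e, f} \<le> card (M \<inter> Eb E ends c)"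
      by (intro card_mono) auto
    then show False using pm[OF M(1)] \<open>f \<noteq> e\<close> by auto
  qed
  have adj: "\<exists>e\<in>E. ends e = {u, v}" if uV: "u \<in> V - {v}" for u
  proof -
    have "\<exists>e\<in>E. u \<in> ends e \<and> c e u = True" using red uV unfolding every_vertex_red_def by simp
    then obtain e where e: "e \<in> E" "u \<in> ends e" "c e u" by auto
    have "v \<in> ends e"
    proof (rule ccontr)
      assume "v \<notin> ends e"
      then have "\<not> bichromatic ends c e" using bi_atv[OF e(1)] by blast
      then have "e \<in> Em E ends c" using e(1) unfolding Em_def by simp
      then have "\<forall>w\<in>ends e. c e w = False" using mb unfolding mono_blue_def by blast
      then show False using e(2,3) by simp
    qed
    obtain w where w: "w \<noteq> u" "ends e = {u, w}" using ends_pair[OF e(1) e(2)] by blast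
    have "u \<noteq> v" using uV by simp
    then have "w = v" using w \<open>v \<in> ends e\<close> by simp
    then show ?thesis using e(1) w by blast
  qed
  have s1: "{e\<in>E. v \<in> ends e} = Eb E ends c"
    unfolding Eb_def using atv_bi bi_atv by blast
  have s2: "{e\<in>E. v \<notin> ends e} = Em E ends c"
    unfolding Em_def using atv_bi bi_atv by blast
  have "\<exists>v\<in>V. (\<forall>u\<in>V - {v}. \<exists>e\<in>E. ends e = {u, v}) \<and>
            {e\<in>E. v \<in> ends e} = Eb E ends c \<and>
            {e\<in>E. v \<notin> ends e} = Em E ends c"
    using vV adj s1 s2 by blast
  then show ?thesis unfolding W_cone_def using mg mb mc red by simp
qed

theorem mainTheorem10:
  fixes V :: "'v set" and E :: "'e set" and ends :: "'e \<Rightarrow> 'v set"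
    and c :: "'e \<Rightarrow> 'v \<Rightarrow> bool" and X X' :: "'v set"
  assumes "W_state_graph V E ends c"
    and "Gm_components V E ends c = {X, X'}" and "X \<noteq> X'"
    and "card X = 1 \<or> card X' = 1"
  shows "W_cone V E ends c"
proof -
  obtain Y where Y: "Y \<in> Gm_components V E ends c" "card Y = 1" using assms(2,4) by auto
  then obtain u where u: "u \<in> V" "Y = {w\<in>V. (u, w) \<in> (mono_adj E ends c)\<^sup>*}"
    unfolding Gm_components_def by auto
  have "u \<in> Y" using u by auto
  then have "Y = {u}" using Y(2) by (metis card_1_singletonE singletonD)
  then show ?thesis using cone_aux[OF assms(1) u(1)] u by simp
qed

end
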